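(* Let $A\in\mathbb{Z}^{d\times n}$ have rank $d$, and let $B^{(0)}$ be the nonsingular matrix chosen in step 1 of the Basic Generalized Euclidean Algorithm. Each exchange step (the "otherwise" branch) replaces the current basis matrix $B$ by a matrix $B'$ with $|\det B'|\le \tfrac12|\det B|$. Consequently the algorithm performs at most $\log_2|\det B^{(0)}|$ exchange steps.
   Context: For real $y$, $\lfloor y\rceil:=\lfloor y+1/2\rfloor$. Basic Generalized Euclidean Algorithm. Input: $A=(A_1,\dots,A_n)\in\mathbb{Z}^{d\times n}$ of rank $d$. 1. Choose $d$ linearly independent columns of $A$ and let $B=(B_1,\dots,B_d)$ be the matrix they form. Let $C$ be the multiset of the remaining $n-d$ columns. 2. While $C\neq\emptyset$: - choose any $c\in C$ and compute $x\in\mathbb{Q}^d$ with $Bx=c$; - if $x\in\mathbb{Z}^d$, remove $c$ from $C$; - otherwise (exchange step) choose an index $\ell$ with $x_\ell\notin\mathbb{Z}$, remove $c$ from $C$, add the current column $B_\ell$ to $C$, and replace the column $B_\ell$ by $c-\bigl(B_\ell\lfloor x_\ell\rceil+\sum_{j\neq\ell}B_j\lfloor x_j\rfloor\bigr)$. 3. Return $B$. *)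

theory Defs
  imports "HOL-Analysis.Analysis" "HOL-Library.Multiset"
begin

definition round_half :: "rat \<Rightarrow> int" where
  "round_half y = \<lfloor>y + 1/2\<rfloor>"

definition ratmat :: "int^'n^'m \<Rightarrow> rat^'n^'m" where
  "ratmat A = (\<chi> i j. of_int (A$i$j))"

definition ratvec :: "int^'m \<Rightarrow> rat^'m" where
  "ratvec v = (\<chi> i. of_int (v$i))"

definition upd_col :: "int^'d^'d \<Rightarrow> 'd \<Rightarrow> int^'d \<Rightarrow> int^'d^'d" where
  "upd_col B l v = (\<chi> i k. if k = l then v$i else B$i$k)"

type_synonym 'd gea_state = "(int^'d^'d) \<times> ((int^'d) multiset)"

text \<open>Step 1: choose d linearly independent columns (indexed injectively by sigma),
  remaining columns form the multiset C.\<close>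
definition gea_init :: "int^'n^'d::finite \<Rightarrow> 'd gea_state \<Rightarrow> bool" where
  "gea_init A s \<longleftrightarrow> (\<exists>\<sigma> :: 'd \<Rightarrow> 'n. inj \<sigma> \<and>
      rank (ratmat (\<chi> i k. A$i$(\<sigma> k))) = CARD('d) \<and>
      fst s = (\<chi> i k. A$i$(\<sigma> k)) \<and>
      snd s = image_mset (\<lambda>j. column j A) (mset_set (UNIV - range \<sigma>)))"

definition gea_plain_step :: "'d::finite gea_state \<Rightarrow> 'd gea_state \<Rightarrow> bool" where
  "gea_plain_step s s' \<longleftrightarrow> (\<exists>c x. c \<in># snd s \<and> ratmat (fst s) *v x = ratvec c \<and>
      (\<forall>j. x$j \<in> \<int>) \<and> s' = (fst s, snd s - {#c#}))"

definition gea_exchange_step :: "'d::finite gea_state \<Rightarrow> 'd gea_state \<Rightarrow> bool" where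
  "gea_exchange_step s s' \<longleftrightarrow> (\<exists>c x l. c \<in># snd s \<and> ratmat (fst s) *v x = ratvec c \<and>
      x$l \<notin> \<int> \<and>
      s' = (upd_col (fst s) l
              (c - (of_int (round_half (x$l)) *s column l (fst s)
                    + (\<Sum>j\<in>UNIV - {l}. of_int \<lfloor>x$j\<rfloor> *s column j (fst s)))),
            snd s - {#c#} + {#column l (fst s)#}))"

definition gea_step :: "'d::finite gea_state \<Rightarrow> 'd gea_state \<Rightarrow> bool" where
  "gea_step s s' \<longleftrightarrow> gea_plain_step s s' \<or> gea_exchange_step s s'"

end

theory Submission
  imports Defs
begin

lemma det_ratmat: "det (ratmat B) = (of_int (det B) :: rat)"
  unfolding det_def ratmat_def by (simp add: of_int_sum of_int_prod)

lemma rank_det_nz: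
  fixes B :: "rat^'d::finite^'d"
  assumes "rank B = CARD('d)"
  shows "det B \<noteq> 0"
proof -
  have d: "vec.dim (rows B) = CARD('d)" using assms by (simp add: row_rank_def_gen)
  have "vec.span (rows B) = UNIV"
  proof -
    have "vec.dim (UNIV::(rat^'d) set) = CARD('d)" by (rule vec_dim_card)
    then show ?thesis using d vec.subspace_dim_equal[of "vec.span (rows B)" UNIV]
      by (simp add: vec.subspace_span vec.subspace_UNIV vec.dim_span)
  qed
  then have "\<exists>C::rat^'d^'d. C ** B = mat 1" using matrix_left_invertible_span_rows_gen by blast
  then have "invertible B" using invertible_left_inverse by blast
  then show ?thesis using invertible_det_nz by blast
qed

lemma ratvec_mult: "ratvec (B *v y) = ratmat B *v ratvec y"
  unfolding ratvec_def ratmat_def matrix_vector_mult_def by (simp add: of_int_sum vec_eq_iff)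

lemma ratvec_diff: "ratvec (a - b) = ratvec a - ratvec b"
  unfolding ratvec_def by (simp add: vec_eq_iff)

lemma round_half_bound: "\<bar>x - of_int (round_half x)\<bar> \<le> 1/2"
proof -
  have "of_int \<lfloor>x + 1/2\<rfloor> \<le> x + 1/2 \<and> x + 1/2 < of_int (\<lfloor>x + 1/2\<rfloor> + 1)"
    by (rule floor_correct)
  then have a: "of_int \<lfloor>x + 1/2\<rfloor> \<le> x + 1/2" and b: "x + 1/2 < of_int \<lfloor>x + 1/2\<rfloor> + 1" by auto
  show ?thesis using a b by (simp only: round_half_def abs_le_iff) linarith
qed

lemma round_half_nz: "x \<notin> \<int> \<Longrightarrow> x - of_int (round_half x) \<noteq> 0"
  by (metis Ints_of_int eq_iff_diff_eq_0)

lemma exchange_det: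
  assumes "gea_exchange_step s s'"
  shows "2 * \<bar>det (fst s')\<bar> \<le> \<bar>det (fst s)\<bar> \<and> (det (fst s) \<noteq> 0 \<longrightarrow> det (fst s') \<noteq> 0)"
proof -
  obtain c x l where cx: "ratmat (fst s) *v x = ratvec c" and nl: "x$l \<notin> \<int>"
    and s': "s' = (upd_col (fst s) l
              (c - (of_int (round_half (x$l)) *s column l (fst s)
                    + (\<Sum>j\<in>UNIV - {l}. of_int \<lfloor>x$j\<rfloor> *s column j (fst s)))),
            snd s - {#c#} + {#column l (fst s)#})"
    using assms unfolding gea_exchange_step_def by blast
  define B where "B = fst s"
  define y :: "int^'a" where "y = (\<chi> j. if j = l then round_half (x$l) else \<lfloor>x$j\<rfloor>)"
  define z where "z = x - ratvec y"
  have sumeq: "of_int (round_half (x$l)) *s column l B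
                    + (\<Sum>j\<in>UNIV - {l}. of_int \<lfloor>x$j\<rfloor> *s column j B) = B *v y"
  proof -
    have "B *v y = (\<Sum>j\<in>UNIV. y$j *s column j B)" by (rule matrix_mult_sum)
    also have "\<dots> = y$l *s column l B + (\<Sum>j\<in>UNIV - {l}. y$j *s column j B)"
      by (simp add: sum.remove)
    also have "\<dots> = of_int (round_half (x$l)) *s column l B
                    + (\<Sum>j\<in>UNIV - {l}. of_int \<lfloor>x$j\<rfloor> *s column j B)"
      by (simp add: y_def)
    finally show ?thesis by simp
  qed
  have fs': "fst s' = upd_col B l (c - B *v y)" using s' sumeq B_def by simp
  have rm: "ratmat (fst s') = (\<chi> i j. if j = l then (ratmat B *v z)$i else ratmat B$i$j)"
  proof -
    have "ratmat B *v z = ratvec c - ratvec (B *v y)"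
      unfolding z_def ratvec_mult using cx B_def by (simp add: matrix_vector_mult_diff_distrib)
    then have "ratmat B *v z = ratvec (c - B *v y)" by (simp add: ratvec_diff)
    then show ?thesis unfolding fs' by (simp add: vec_eq_iff ratmat_def upd_col_def ratvec_def)
  qed
  have "(of_int (det (fst s')) :: rat) = z$l * of_int (det B)"
    using cramer_lemma[of l "ratmat B" z] unfolding rm[symmetric] det_ratmat by simp
  moreover have zl: "z$l = x$l - of_int (round_half (x$l))"
    by (simp add: z_def y_def ratvec_def)
  ultimately have eq: "(of_int (det (fst s')) :: rat) = (x$l - of_int (round_half (x$l))) * of_int (det B)"
    by simp
  have "\<bar>(of_int (det (fst s')) :: rat)\<bar> \<le> 1/2 * \<bar>of_int (det B)\<bar>"
    unfolding eq abs_mult by (rule mult_right_mono[OF round_half_bound]) simp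
  then have "(of_int (2 * \<bar>det (fst s')\<bar>) :: rat) \<le> of_int \<bar>det B\<bar>" by simp
  then have 1: "2 * \<bar>det (fst s')\<bar> \<le> \<bar>det B\<bar>" by (simp only: of_int_le_iff)
  have 2: "det B \<noteq> 0 \<longrightarrow> det (fst s') \<noteq> 0"
    using eq round_half_nz[OF nl] by auto
  show ?thesis using 1 2 B_def by simp
qed

lemma plain_fst: "gea_plain_step s s' \<Longrightarrow> fst s' = fst s"
  unfolding gea_plain_step_def by auto

lemma card_Suc_set:
  "card {i. i < Suc m \<and> P i} = card {i. i < m \<and> P i} + (if P m then 1 else 0)"
proof -
  have e: "{i. i < Suc m \<and> P i} = (if P m then insert m {i. i < m \<and> P i} else {i. i < m \<and> P i})"
    by (auto simp: less_Suc_eq)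
  show ?thesis unfolding e by simp
qed

theorem mainTheorem2:
  fixes A :: "int^'n::finite^'d::finite"
    and s :: "nat \<Rightarrow> 'd gea_state"
    and k :: nat
  assumes "rank (ratmat A) = CARD('d)"
    and "gea_init A (s 0)"
    and "\<forall>i<k. gea_step (s i) (s (Suc i))"
  shows "(\<forall>i<k. gea_exchange_step (s i) (s (Suc i)) \<longrightarrow>
            \<bar>real_of_int (det (fst (s (Suc i))))\<bar> \<le> \<bar>real_of_int (det (fst (s i)))\<bar> / 2)
       \<and> real (card {i. i < k \<and> gea_exchange_step (s i) (s (Suc i))})
            \<le> log 2 \<bar>real_of_int (det (fst (s 0)))\<bar>"
proof -
  let ?E = "\<lambda>i. gea_exchange_step (s i) (s (Suc i))"
  let ?N = "\<lambda>m. card {i. i < m \<and> ?E i}"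
  obtain \<sigma> :: "'d \<Rightarrow> 'n" where r: "rank (ratmat (\<chi> i k. A$i$(\<sigma> k))) = CARD('d)"
    and f0: "fst (s 0) = (\<chi> i k. A$i$(\<sigma> k))"
    using assms(2) unfolding gea_init_def by blast
  have "det (ratmat (fst (s 0))) \<noteq> 0" using rank_det_nz r f0 by metis
  then have d0: "det (fst (s 0)) \<noteq> 0" unfolding det_ratmat by simp
  have P1: "\<forall>i<k. ?E i \<longrightarrow>
            \<bar>real_of_int (det (fst (s (Suc i))))\<bar> \<le> \<bar>real_of_int (det (fst (s i)))\<bar> / 2"
  proof (intro allI impI)
    fix i assume "i < k" "?E i"
    then have "2 * \<bar>det (fst (s (Suc i)))\<bar> \<le> \<bar>det (fst (s i))\<bar>" using exchange_det by blast
    then have "real_of_int (2 * \<bar>det (fst (s (Suc i)))\<bar>) \<le> real_of_int \<bar>det (fst (s i))\<bar>"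
      by (simp only: of_int_le_iff)
    then show "\<bar>real_of_int (det (fst (s (Suc i))))\<bar> \<le> \<bar>real_of_int (det (fst (s i)))\<bar> / 2"
      by simp
  qed
  have inv: "m \<le> k \<Longrightarrow> 2 ^ ?N m * \<bar>det (fst (s m))\<bar> \<le> \<bar>det (fst (s 0))\<bar> \<and> det (fst (s m)) \<noteq> 0" for m
  proof (induction m)
    case 0
    then show ?case using d0 by simp
  next
    case (Suc m)
    then have IH: "2 ^ ?N m * \<bar>det (fst (s m))\<bar> \<le> \<bar>det (fst (s 0))\<bar>" "det (fst (s m)) \<noteq> 0"
      by auto
    have st: "gea_step (s m) (s (Suc m))" using Suc.prems assms(3) by auto
    show ?case
    proof (cases "?E m")
      case True
      then have h: "2 * \<bar>det (fst (s (Suc m)))\<bar> \<le> \<bar>det (fst (s m))\<bar>" "det (fst (s (Suc m))) \<noteq> 0"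
        using exchange_det IH(2) by blast+
      have "2 ^ ?N (Suc m) * \<bar>det (fst (s (Suc m)))\<bar> = 2 ^ ?N m * (2 * \<bar>det (fst (s (Suc m)))\<bar>)"
        unfolding card_Suc_set using True by simp
      also have "\<dots> \<le> 2 ^ ?N m * \<bar>det (fst (s m))\<bar>" using h(1) by (simp add: mult_left_mono)
      finally show ?thesis using IH h(2) by linarith
    next
      case False
      then have "gea_plain_step (s m) (s (Suc m))" using st unfolding gea_step_def by blast
      then have "fst (s (Suc m)) = fst (s m)" by (rule plain_fst)
      moreover have "?N (Suc m) = ?N m" unfolding card_Suc_set using False by simp
      ultimately show ?thesis using IH by simp
    qed
  qed
  have "2 ^ ?N k * \<bar>det (fst (s k))\<bar> \<le> \<bar>det (fst (s 0))\<bar>" "det (fst (s k)) \<noteq> 0" using inv by auto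
  then have "(2::int) ^ ?N k \<le> \<bar>det (fst (s 0))\<bar>"
    by (smt (verit) mult_le_cancel_left1 zero_le_power)
  then have le: "(2::real) ^ ?N k \<le> \<bar>real_of_int (det (fst (s 0)))\<bar>"
  proof -
    have "real_of_int ((2::int) ^ ?N k) \<le> real_of_int \<bar>det (fst (s 0))\<bar>"
      using \<open>(2::int) ^ ?N k \<le> _\<close> by (simp only: of_int_le_iff)
    then show ?thesis by simp
  qed
  have "real (?N k) = log 2 ((2::real) ^ ?N k)" by (simp add: log_nat_power)
  also have "\<dots> \<le> log 2 \<bar>real_of_int (det (fst (s 0)))\<bar>"
    using le d0 by (subst log_le_cancel_iff) auto
  finally show ?thesis using P1 by blast
qed

end
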